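(* Let $d\ge 1$ be an odd integer, $p\ge 0$ an integer, and $M\ge 1$ an integer with $2M+1\ge d+p+1$. Let $\gamma:[0,\pi]\to[0,\infty)$ be an integrable weighting function that is positive on a subset of $[0,\pi]$ of positive measure. For $\mathbf a=(a_{-M},\dots,a_M)\in\mathbb R^{2M+1}$ define the spectral error $$e(\eta)=\sum_{m=-M}^{M}a_m e^{jm\eta}-(j\eta)^d,\qquad \eta\in[0,\pi],\ j=\sqrt{-1}.$$ Let $\mathbf a^\ast$ be a minimizer of $$\int_0^\pi \gamma(\eta)\,|e(\eta)|^2\,d\eta$$ over all $\mathbf a\in\mathbb R^{2M+1}$ satisfying the order-of-accuracy constraints $$\sum_{m=-M}^{M} m^q a_m=\begin{cases}0,& q\neq d,\\ d!,& q=d,\end{cases}\qquad q=0,1,\dots,d+p .$$ Then the spectral error of $\mathbf a^\ast$ satisfies $\operatorname{Re}[e(\eta)]=0$ for all $\eta\in[0,\pi]$ (equivalently $\sum_m a^\ast_m\cos(m\eta)\equiv 0$).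
   Context: This concerns explicit finite difference approximations $f^{(d)}(x_i)\approx (\Delta x)^{-d}\sum_{m=-M}^{M}a_m f(x_i+m\Delta x)$ of the $d$-th derivative on a uniform grid with spacing $\Delta x$; $\eta=k\Delta x$ is the normalized wavenumber. The constraints express that the approximation has truncation error of order $p+1$. Here $0^0=1$. *)

theory Defs
  imports "HOL-Analysis.Analysis"
begin

text \<open>Coefficients a_m, m = -M..M, are represented by a function int => real;
only the values on {-M..M} matter.\<close>

definition spec_err :: "nat \<Rightarrow> nat \<Rightarrow> (int \<Rightarrow> real) \<Rightarrow> real \<Rightarrow> complex" where
  "spec_err M d a \<eta> =
     (\<Sum>m\<in>{-int M..int M}. complex_of_real (a m) * exp (\<i> * of_int m * complex_of_real \<eta>))
     - (\<i> * complex_of_real \<eta>) ^ d"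

definition order_constraints :: "nat \<Rightarrow> nat \<Rightarrow> nat \<Rightarrow> (int \<Rightarrow> real) \<Rightarrow> bool" where
  "order_constraints M d p a \<longleftrightarrow>
     (\<forall>q\<le>d + p. (\<Sum>m\<in>{-int M..int M}. real_of_int m ^ q * a m) = (if q = d then fact d else 0))"

definition weighted_error :: "(real \<Rightarrow> real) \<Rightarrow> nat \<Rightarrow> nat \<Rightarrow> (int \<Rightarrow> real) \<Rightarrow> real" where
  "weighted_error \<gamma> M d a = integral {0..pi} (\<lambda>\<eta>. \<gamma> \<eta> * (cmod (spec_err M d a \<eta>))\<^sup>2)"

end

theory Submission
  imports Defs "HOL-Computational_Algebra.Polynomial"
begin

lemma cheb_ex: "\<exists>P::real poly. \<forall>x. cos (real n * x) = poly P (cos x)"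
proof -
  have "(\<exists>P::real poly. \<forall>x. cos (real n * x) = poly P (cos x)) \<and>
        (\<exists>P::real poly. \<forall>x. cos (real (Suc n) * x) = poly P (cos x))"
  proof (induction n)
    case 0
    have "\<forall>x. cos (real 0 * x) = poly [:1:] (cos x)" by simp
    moreover have "\<forall>x. cos (real (Suc 0) * x) = poly [:0,1:] (cos x)" by simp
    ultimately show ?case by blast
  next
    case (Suc n)
    then obtain P Q :: "real poly" where P: "\<forall>x. cos (real n * x) = poly P (cos x)"
      and Q: "\<forall>x. cos (real (Suc n) * x) = poly Q (cos x)" by blast
    have "cos (real (Suc (Suc n)) * x) = poly ([:0,2:] * Q - P) (cos x)" for x
    proof -
      have "cos (real (Suc (Suc n)) * x) = cos (real (Suc n) * x + x)"
        by (simp add: algebra_simps)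
      also have "\<dots> = 2 * cos x * cos (real (Suc n) * x) - cos (real (Suc n) * x - x)"
        by (simp add: cos_add cos_diff)
      also have "real (Suc n) * x - x = real n * x" by (simp add: algebra_simps)
      finally show ?thesis using P Q by simp
    qed
    then show ?case using Q by blast
  qed
  then show ?thesis by blast
qed

lemma re_pow_odd: "odd d \<Longrightarrow> Re ((\<i> * complex_of_real x) ^ d) = 0"
proof -
  assume "odd d"
  then obtain k where d: "d = Suc (2*k)" by (metis oddE Suc_eq_plus1)
  have sq: "(\<i> * complex_of_real x) ^ 2 = complex_of_real (- (x^2))" by (simp add: power_mult_distrib)
  have "(\<i> * complex_of_real x) ^ d = (\<i> * complex_of_real x) * ((\<i> * complex_of_real x) ^ 2) ^ k"
    by (simp only: d power_Suc power_mult)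
  also have "\<dots> = \<i> * complex_of_real (x * (- (x^2)) ^ k)" by (simp only: sq of_real_power of_real_mult mult.assoc)
  finally show ?thesis by simp
qed

lemma re_err: "odd d \<Longrightarrow> Re (spec_err M d a \<eta>) = (\<Sum>m\<in>{-int M..int M}. a m * cos (of_int m * \<eta>))"
  unfolding spec_err_def using re_pow_odd[of d \<eta>]
  by (simp add: Re_exp Im_exp)

lemma im_err: "Im (spec_err M d a \<eta>) = (\<Sum>m\<in>{-int M..int M}. a m * sin (of_int m * \<eta>)) - Im ((\<i> * complex_of_real \<eta>) ^ d)"
  unfolding spec_err_def
  by (simp add: Re_exp Im_exp)

lemma sum_neg: "(\<Sum>m\<in>{-int M..int M}. f (-m)) = (\<Sum>m\<in>{-int M..int M}. f m)"
  by (rule sum.reindex_bij_witness[of _ uminus uminus]) auto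


lemma cos_int_nat: "cos (of_int m * x) = cos (real (nat \<bar>m\<bar>) * x)"
proof (cases "m \<ge> 0")
  case True then show ?thesis by simp
next
  case False
  then have "(of_int m :: real) = - real (nat \<bar>m\<bar>)" by simp
  then show ?thesis by simp
qed

lemma trig_zero:
  assumes inf: "infinite {\<eta>\<in>{0..pi}. (\<Sum>m\<in>{-int M..int M}. a m * cos (of_int m * \<eta>)) = 0}"
  shows "(\<Sum>m\<in>{-int M..int M}. a m * cos (of_int m * \<eta>)) = 0"
proof -
  obtain T where T: "\<And>n x. cos (real n * x) = poly (T n) (cos x)"
    using cheb_ex by metis
  define P where "P = (\<Sum>m\<in>{-int M..int M}. smult (a m) (T (nat \<bar>m\<bar>)))"
  have RP: "(\<Sum>m\<in>{-int M..int M}. a m * cos (of_int m * x)) = poly P (cos x)" for x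
    unfolding P_def poly_sum by (intro sum.cong refl) (simp only: poly_smult cos_int_nat T)
  show ?thesis
  proof (rule ccontr)
    assume ne: "(\<Sum>m\<in>{-int M..int M}. a m * cos (of_int m * \<eta>)) \<noteq> 0"
    then have "P \<noteq> 0" using RP by auto
    then have fin: "finite {y. poly P y = 0}" by (rule poly_roots_finite)
    let ?Z = "{\<eta>\<in>{0..pi}. (\<Sum>m\<in>{-int M..int M}. a m * cos (of_int m * \<eta>)) = 0}"
    have "cos ` ?Z \<subseteq> {y. poly P y = 0}" using RP by auto
    then have "finite (cos ` ?Z)" using fin finite_subset by blast
    moreover have "inj_on cos ?Z" by (auto intro!: inj_onI cos_inj_pi)
    ultimately have "finite ?Z" using finite_imageD by blast
    then show False using inf by blast
  qed
qed

theorem lemma2: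
  fixes d p M :: nat and \<gamma> :: "real \<Rightarrow> real" and a :: "int \<Rightarrow> real"
  assumes "odd d" and "M \<ge> 1" and "2 * M + 1 \<ge> d + p + 1"
    and "\<gamma> integrable_on {0..pi}"
    and "\<And>\<eta>. \<eta> \<in> {0..pi} \<Longrightarrow> \<gamma> \<eta> \<ge> 0"
    and "emeasure lebesgue {\<eta> \<in> {0..pi}. \<gamma> \<eta> > 0} > 0"
    and "order_constraints M d p a"
    and "\<And>b. order_constraints M d p b \<Longrightarrow> weighted_error \<gamma> M d a \<le> weighted_error \<gamma> M d b"
  shows "\<forall>\<eta>\<in>{0..pi}. Re (spec_err M d a \<eta>) = 0"
proof -
  let ?S = "{0..pi::real}"
  define b where "b m = (a m - a (-m)) / 2" for m
  define R where "R \<eta> = (\<Sum>m\<in>{-int M..int M}. a m * cos (of_int m * \<eta>))" for \<eta>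
  have ReA: "Re (spec_err M d a \<eta>) = R \<eta>" for \<eta> using re_err[OF assms(1)] R_def by simp
  have ReB: "Re (spec_err M d b \<eta>) = 0" for \<eta>
  proof -
    have "(\<Sum>m\<in>{-int M..int M}. a (-m) * cos (of_int m * \<eta>)) = (\<Sum>m\<in>{-int M..int M}. a m * cos (of_int (-m) * \<eta>))"
      using sum_neg[of "\<lambda>m. a m * cos (of_int (-m) * \<eta>)" M] by simp
    also have "\<dots> = (\<Sum>m\<in>{-int M..int M}. a m * cos (of_int m * \<eta>))" by simp
    finally have e: "(\<Sum>m\<in>{-int M..int M}. a (-m) * cos (of_int m * \<eta>)) = (\<Sum>m\<in>{-int M..int M}. a m * cos (of_int m * \<eta>))" .
    have "Re (spec_err M d b \<eta>) = ((\<Sum>m\<in>{-int M..int M}. a m * cos (of_int m * \<eta>)) - (\<Sum>m\<in>{-int M..int M}. a (-m) * cos (of_int m * \<eta>))) / 2"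
      unfolding re_err[OF assms(1)] sum_subtractf[symmetric] sum_divide_distrib b_def by (intro sum.cong refl) (simp add: field_simps)
    then show ?thesis using e by simp
  qed
  have ImB: "Im (spec_err M d b \<eta>) = Im (spec_err M d a \<eta>)" for \<eta>
  proof -
    have "(\<Sum>m\<in>{-int M..int M}. a (-m) * sin (of_int m * \<eta>)) = (\<Sum>m\<in>{-int M..int M}. a m * sin (of_int (-m) * \<eta>))"
      using sum_neg[of "\<lambda>m. a m * sin (of_int (-m) * \<eta>)" M] by simp
    also have "\<dots> = - (\<Sum>m\<in>{-int M..int M}. a m * sin (of_int m * \<eta>))" unfolding sum_negf[symmetric] by (intro sum.cong refl) simp
    finally have e: "(\<Sum>m\<in>{-int M..int M}. a (-m) * sin (of_int m * \<eta>)) = - (\<Sum>m\<in>{-int M..int M}. a m * sin (of_int m * \<eta>))" .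
    have "(\<Sum>m\<in>{-int M..int M}. b m * sin (of_int m * \<eta>)) = ((\<Sum>m\<in>{-int M..int M}. a m * sin (of_int m * \<eta>)) - (\<Sum>m\<in>{-int M..int M}. a (-m) * sin (of_int m * \<eta>))) / 2"
      unfolding sum_subtractf[symmetric] sum_divide_distrib b_def by (intro sum.cong refl) (simp add: field_simps)
    then show ?thesis unfolding im_err using e by simp
  qed
  have ocb: "order_constraints M d p b"
    unfolding order_constraints_def
  proof (intro allI impI)
    fix q assume q: "q \<le> d + p"
    have aq: "(\<Sum>m\<in>{-int M..int M}. real_of_int m ^ q * a m) = (if q = d then fact d else 0)"
      using assms(7)[unfolded order_constraints_def, rule_format, OF q] .
    have "(\<Sum>m\<in>{-int M..int M}. real_of_int m ^ q * a (-m)) = (\<Sum>m\<in>{-int M..int M}. real_of_int (-m) ^ q * a m)"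
      using sum_neg[of "\<lambda>m. real_of_int (-m) ^ q * a m" M] by simp
    also have "\<dots> = (-1)^q * (\<Sum>m\<in>{-int M..int M}. real_of_int m ^ q * a m)"
      unfolding sum_distrib_left by (intro sum.cong refl) (metis (no_types) mult.assoc mult_minus1 power_mult_distrib of_int_minus)
    finally have e: "(\<Sum>m\<in>{-int M..int M}. real_of_int m ^ q * a (-m)) = (-1)^q * (\<Sum>m\<in>{-int M..int M}. real_of_int m ^ q * a m)" .
    have "(\<Sum>m\<in>{-int M..int M}. real_of_int m ^ q * b m) = ((\<Sum>m\<in>{-int M..int M}. real_of_int m ^ q * a m) - (\<Sum>m\<in>{-int M..int M}. real_of_int m ^ q * a (-m))) / 2"
      unfolding sum_subtractf[symmetric] sum_divide_distrib b_def by (intro sum.cong refl) (simp add: field_simps)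
    also have "\<dots> = (if q = d then fact d else 0)"
    proof (cases "even q")
      case True
      then have "q \<noteq> d" using assms(1) by auto
      then show ?thesis using e True aq by simp
    next
      case False
      then show ?thesis using e aq by simp
    qed
    finally show "(\<Sum>m\<in>{-int M..int M}. real_of_int m ^ q * b m) = (if q = d then fact d else 0)" .
  qed
  have gabs: "\<gamma> absolutely_integrable_on ?S"
    using assms(4,5) by (rule nonnegative_absolutely_integrable_1)
  have cont: "continuous_on ?S (\<lambda>\<eta>. spec_err M d c \<eta>)" for c
    unfolding spec_err_def by (intro continuous_intros)
  have prod: "(\<lambda>\<eta>. \<gamma> \<eta> * f \<eta>) absolutely_integrable_on ?S" if "continuous_on ?S f" for f
  proof -
    have "(\<lambda>\<eta>. f \<eta> * \<gamma> \<eta>) absolutely_integrable_on ?S"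
    proof (rule absolutely_integrable_bounded_measurable_product_real)
      show "f \<in> borel_measurable (lebesgue_on ?S)"
        using that by (intro continuous_imp_measurable_on_sets_lebesgue) auto
      show "bounded (f ` ?S)" using that compact_continuous_image compact_imp_bounded by blast
    qed (use gabs in auto)
    then show ?thesis by (simp add: mult.commute)
  qed
  define g1 where "g1 \<eta> = \<gamma> \<eta> * (cmod (spec_err M d a \<eta>))\<^sup>2" for \<eta>
  define g2 where "g2 \<eta> = \<gamma> \<eta> * (cmod (spec_err M d b \<eta>))\<^sup>2" for \<eta>
  define h where "h \<eta> = \<gamma> \<eta> * (R \<eta>)\<^sup>2" for \<eta>
  have i1: "g1 integrable_on ?S" unfolding g1_def
    by (rule set_lebesgue_integral_eq_integral(1), rule prod) (intro continuous_intros cont)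
  have i2: "g2 integrable_on ?S" unfolding g2_def
    by (rule set_lebesgue_integral_eq_integral(1), rule prod) (intro continuous_intros cont)
  have hg: "h \<eta> = g1 \<eta> - g2 \<eta>" for \<eta>
    unfolding h_def g1_def g2_def cmod_power2 ReA ReB ImB by (simp add: algebra_simps)
  have habs: "h absolutely_integrable_on ?S"
  proof -
    have "continuous_on ?S (\<lambda>\<eta>. (Re (spec_err M d a \<eta>))\<^sup>2)"
      by (intro continuous_intros cont)
    then show ?thesis using prod unfolding h_def ReA by blast
  qed
  have "integral ?S h = integral ?S g1 - integral ?S g2"
    unfolding hg using i1 i2 by (rule integral_diff)
  also have "\<dots> \<le> 0"
    using assms(8)[OF ocb] unfolding weighted_error_def g1_def g2_def by simp
  finally have hle: "integral ?S h \<le> 0" .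
  have hnn: "0 \<le> h \<eta>" if "\<eta> \<in> ?S" for \<eta> unfolding h_def using assms(5)[OF that] by simp
  have "integral ?S h \<ge> 0"
    using hnn set_lebesgue_integral_eq_integral(1)[OF habs] by (intro integral_nonneg) auto
  with hle have h0: "integral ?S h = 0" by simp
  have "integral ?S h = set_lebesgue_integral lebesgue ?S h"
    by (intro set_lebesgue_integral_eq_integral(2)[symmetric] habs)
  also have "\<dots> = 0 \<longleftrightarrow> (AE x in lebesgue. indicator ?S x *\<^sub>R h x = 0)"
    unfolding set_lebesgue_integral_def
  proof (rule integral_nonneg_eq_0_iff_AE)
    show "integrable lebesgue (\<lambda>x. indicat_real ?S x *\<^sub>R h x)"
      by (metis habs set_integrable_def)
  qed (use hnn in \<open>auto simp: indicator_def\<close>)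
  finally have AE: "AE x in lebesgue. indicator ?S x *\<^sub>R h x = 0" using h0 by simp
  then obtain N where N: "{x \<in> space lebesgue. \<not> (indicator ?S x *\<^sub>R h x = 0)} \<subseteq> N"
    "emeasure lebesgue N = 0" "N \<in> sets lebesgue" by (rule AE_E)
  have negN: "negligible N" using N(2,3) negligible_iff_emeasure0 by blast
  show ?thesis
  proof (rule ccontr)
    assume "\<not> ?thesis"
    then obtain \<eta>0 where \<eta>0: "\<eta>0 \<in> ?S" "R \<eta>0 \<noteq> 0" using ReA by auto
    let ?Z = "{\<eta>\<in>?S. R \<eta> = 0}"
    have "finite ?Z"
      using trig_zero[where M=M and a=a and \<eta>=\<eta>0] \<eta>0(2) unfolding R_def by blast
    then have negZ: "negligible ?Z" by (rule negligible_finite)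
    have sub: "{\<eta> \<in> ?S. \<gamma> \<eta> > 0} \<subseteq> N \<union> ?Z"
    proof
      fix x assume x: "x \<in> {\<eta> \<in> ?S. \<gamma> \<eta> > 0}"
      show "x \<in> N \<union> ?Z"
      proof (cases "x \<in> N")
        case False
        then have "h x = 0" using N(1) x by (auto simp: indicator_def)
        then have "R x = 0" using x unfolding h_def by simp
        then show ?thesis using x by simp
      qed simp
    qed
    have "negligible {\<eta> \<in> ?S. \<gamma> \<eta> > 0}"
      by (rule negligible_subset[OF _ sub]) (use negN negZ in \<open>simp add: negligible_Un\<close>)
    then have "emeasure lebesgue {\<eta> \<in> ?S. \<gamma> \<eta> > 0} = 0"
      using negligible_iff_null_sets null_setsD1 by blast
    then show False using assms(6) by simp
  qed
qed

end
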